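(* Assume that for every $n \ge 1$ and all $y_1, \dots, y_n \in \mathscr{L}$ that are linearly independent over $\mathbf{Q}$, one has $\operatorname{trdeg}_{\mathbf{Q}} \mathbf{Q}(y_1, \dots, y_n) = n$. Then for all positive integers $m, n$, every matrix $M \in M_{m \times n}(\mathscr{L} + \mathbf{Q})$ has rank (over $\mathbf{C}$) equal to its structural rank.
   Context: $\mathscr{L} = \{x \in \mathbf{C} : e^x \in \overline{\mathbf{Q}}\}$, a $\mathbf{Q}$-vector space, and $\mathscr{L} + \mathbf{Q}$ is the $\mathbf{Q}$-span of $\mathscr{L}$ and $\mathbf{Q}$ in $\mathbf{C}$. Structural rank: choose a $\mathbf{Q}$-basis $\ell_1, \dots, \ell_k$ of the $\mathbf{Q}$-span of the entries of $M$, write $M = \sum_i \ell_i M_i$ with $M_i \in M_{m \times n}(\mathbf{Q})$, and define the structural rank of $M$ to be the rank of $\sum_i x_i M_i$ over the rational function field $\mathbf{Q}(x_1, \dots, x_k)$ (this is independent of the choice of basis). *)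

theory Defs
  imports "Jordan_Normal_Form.DL_Rank" "HOL-Library.Poly_Mapping"
    "HOL-Computational_Algebra.Fraction_Field" "HOL-Computational_Algebra.Polynomial"
begin

definition Lset :: "complex set" where
  "Lset = {x. algebraic (exp x)}"

definition qspan :: "complex set \<Rightarrow> complex set" where
  "qspan A = {x. \<exists>F c. finite F \<and> F \<subseteq> A \<and> x = (\<Sum>a\<in>F. of_rat (c a) * a)}"

definition q_indep :: "nat \<Rightarrow> (nat \<Rightarrow> complex) \<Rightarrow> bool" where
  "q_indep n y \<longleftrightarrow>
     (\<forall>c :: nat \<Rightarrow> rat. (\<Sum>i<n. of_rat (c i) * y i) = 0 \<longrightarrow> (\<forall>i<n. c i = 0))"

text \<open>Multivariate polynomials over Q: (nat =>0 nat) =>0 rat (monomial exponent vector to coefficient).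
  Evaluation at a point y.\<close>
definition mpoly_eval :: "((nat \<Rightarrow>\<^sub>0 nat) \<Rightarrow>\<^sub>0 rat) \<Rightarrow> (nat \<Rightarrow> complex) \<Rightarrow> complex" where
  "mpoly_eval p y =
     (\<Sum>\<alpha>\<in>Poly_Mapping.keys p. of_rat (Poly_Mapping.lookup p \<alpha>) * (\<Prod>i\<in>Poly_Mapping.keys \<alpha>. y i ^ Poly_Mapping.lookup \<alpha> i))"

text \<open>y_0, ..., y_(n-1) are algebraically independent over Q, i.e.
  trdeg_Q Q(y_0,...,y_(n-1)) = n.\<close>
definition alg_indep :: "nat \<Rightarrow> (nat \<Rightarrow> complex) \<Rightarrow> bool" where
  "alg_indep n y \<longleftrightarrow>
     (\<forall>p. (\<forall>\<alpha>\<in>Poly_Mapping.keys p. Poly_Mapping.keys \<alpha> \<subseteq> {..<n}) \<longrightarrow> mpoly_eval p y = 0 \<longrightarrow> p = 0)"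

text \<open>The rational function field Q(x_0, x_1, ...) as the fraction field of Q[x_0, x_1, ...].\<close>
type_synonym ratfun = "((nat \<Rightarrow>\<^sub>0 nat) \<Rightarrow>\<^sub>0 rat) fract"

definition rf_const :: "rat \<Rightarrow> ratfun" where
  "rf_const q = Fract (Poly_Mapping.single 0 q) 1"

definition rf_var :: "nat \<Rightarrow> ratfun" where
  "rf_var i = Fract (Poly_Mapping.single (Poly_Mapping.single i 1) 1) 1"

definition mat_entries :: "'a mat \<Rightarrow> 'a set" where
  "mat_entries M = {M $$ (i, j) | i j. i < dim_row M \<and> j < dim_col M}"

definition struct_decomp :: "complex mat \<Rightarrow> nat \<Rightarrow> (nat \<Rightarrow> complex) \<Rightarrow> (nat \<Rightarrow> rat mat) \<Rightarrow> bool" where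
  "struct_decomp M k l Ms \<longleftrightarrow>
     q_indep k l \<and> qspan (l ` {..<k}) = qspan (mat_entries M) \<and>
     (\<forall>i<k. Ms i \<in> carrier_mat (dim_row M) (dim_col M)) \<and>
     M = mat (dim_row M) (dim_col M) (\<lambda>(r, c). \<Sum>i<k. l i * of_rat (Ms i $$ (r, c)))"

definition structural_rank :: "complex mat \<Rightarrow> nat" where
  "structural_rank M =
     (let (k, l, Ms) = (SOME (k, l, Ms). struct_decomp M k l Ms)
      in vec_space.rank (dim_row M)
           (mat (dim_row M) (dim_col M)
              (\<lambda>(r, c). \<Sum>i<k. rf_var i * rf_const (Ms i $$ (r, c))) :: ratfun mat))"

end

theory Submission
  imports Defs "Jordan_Normal_Form.DL_Rank_Submatrix"
begin

type_synonym mp = "(nat \<Rightarrow>\<^sub>0 nat) \<Rightarrow>\<^sub>0 rat"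

definition pmon :: "(nat \<Rightarrow> 'b::comm_semiring_1) \<Rightarrow> (nat \<Rightarrow>\<^sub>0 nat) \<Rightarrow> 'b" where
  "pmon v \<alpha> = (\<Prod>i\<in>Poly_Mapping.keys \<alpha>. v i ^ Poly_Mapping.lookup \<alpha> i)"

definition pev :: "(rat \<Rightarrow> 'b::comm_ring_1) \<Rightarrow> (nat \<Rightarrow> 'b) \<Rightarrow> mp \<Rightarrow> 'b" where
  "pev h v p = (\<Sum>\<alpha>\<in>Poly_Mapping.keys p. h (Poly_Mapping.lookup p \<alpha>) * pmon v \<alpha>)"

lemma mpoly_eval_pev: "mpoly_eval p y = pev of_rat y p"
  unfolding mpoly_eval_def pev_def pmon_def ..

lemma pmon_superset:
  assumes "finite K" "Poly_Mapping.keys \<alpha> \<subseteq> K"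
  shows "pmon v \<alpha> = (\<Prod>i\<in>K. v i ^ Poly_Mapping.lookup \<alpha> i)"
  unfolding pmon_def
  by (rule prod.mono_neutral_left) (use assms in \<open>auto simp: in_keys_iff\<close>)

lemma pmon_add: "pmon v (\<alpha> + \<beta>) = pmon v \<alpha> * pmon v \<beta>"
proof -
  define K where "K = Poly_Mapping.keys \<alpha> \<union> Poly_Mapping.keys \<beta>"
  have fK: "finite K" unfolding K_def by simp
  have k: "Poly_Mapping.keys (\<alpha> + \<beta>) \<subseteq> K" unfolding K_def by (rule keys_add)
  have "pmon v (\<alpha> + \<beta>) = (\<Prod>i\<in>K. v i ^ Poly_Mapping.lookup (\<alpha> + \<beta>) i)"
    by (rule pmon_superset[OF fK k])
  also have "\<dots> = (\<Prod>i\<in>K. v i ^ Poly_Mapping.lookup \<alpha> i) * (\<Prod>i\<in>K. v i ^ Poly_Mapping.lookup \<beta> i)"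
    by (simp add: lookup_add power_add prod.distrib)
  also have "\<dots> = pmon v \<alpha> * pmon v \<beta>"
    by (simp add: pmon_superset[OF fK] K_def)
  finally show ?thesis .
qed

lemma pmon_zero [simp]: "pmon v 0 = 1" by (simp add: pmon_def)

lemma pmon_single: "pmon v (Poly_Mapping.single i 1) = v i"
proof -
  have "Poly_Mapping.keys (Poly_Mapping.single i (1::nat)) = {i}" by simp
  then show ?thesis by (simp add: pmon_def)
qed

lemma poly_decomp: "p = (\<Sum>\<alpha>\<in>Poly_Mapping.keys p. Poly_Mapping.single \<alpha> (Poly_Mapping.lookup p \<alpha>))"
proof (rule poly_mapping_eqI)
  fix \<beta>
  have "Poly_Mapping.lookup (\<Sum>\<alpha>\<in>Poly_Mapping.keys p. Poly_Mapping.single \<alpha> (Poly_Mapping.lookup p \<alpha>)) \<beta>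
      = (\<Sum>\<alpha>\<in>Poly_Mapping.keys p. Poly_Mapping.lookup (Poly_Mapping.single \<alpha> (Poly_Mapping.lookup p \<alpha>)) \<beta>)"
    by (rule lookup_sum)
  also have "\<dots> = (\<Sum>\<alpha>\<in>Poly_Mapping.keys p. if \<alpha> = \<beta> then Poly_Mapping.lookup p \<alpha> else 0)"
    by (rule sum.cong) (auto simp: lookup_single)
  also have "\<dots> = Poly_Mapping.lookup p \<beta>"
    by (simp add: in_keys_iff)
  finally show "Poly_Mapping.lookup p \<beta> = Poly_Mapping.lookup (\<Sum>\<alpha>\<in>Poly_Mapping.keys p. Poly_Mapping.single \<alpha> (Poly_Mapping.lookup p \<alpha>)) \<beta>" by simp
qed

context
  fixes h :: "rat \<Rightarrow> 'b::comm_ring_1"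
  assumes h: "comm_ring_hom h"
begin

interpretation H: comm_ring_hom h by (rule h)

lemma pev_superset:
  assumes "finite K" "Poly_Mapping.keys p \<subseteq> K"
  shows "pev h v p = (\<Sum>\<alpha>\<in>K. h (Poly_Mapping.lookup p \<alpha>) * pmon v \<alpha>)"
  unfolding pev_def
  by (rule sum.mono_neutral_left) (use assms in \<open>auto simp: in_keys_iff\<close>)

lemma pev_zero: "pev h v 0 = 0" by (simp add: pev_def)

lemma pev_add: "pev h v (p + q) = pev h v p + pev h v q"
proof -
  define K where "K = Poly_Mapping.keys p \<union> Poly_Mapping.keys q"
  have fK: "finite K" unfolding K_def by simp
  have k: "Poly_Mapping.keys (p + q) \<subseteq> K" unfolding K_def by (rule keys_add)
  show ?thesis
    by (simp add: pev_superset[OF fK k] pev_superset[OF fK] K_def lookup_add H.hom_add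
        distrib_right sum.distrib)
qed

lemma pev_sum: "pev h v (sum f A) = (\<Sum>a\<in>A. pev h v (f a))"
  by (induction A rule: infinite_finite_induct) (simp_all add: pev_zero pev_add)

lemma pev_single: "pev h v (Poly_Mapping.single \<alpha> c) = h c * pmon v \<alpha>"
  by (cases "c = 0") (simp_all add: pev_def)

lemma pev_mult: "pev h v (p * q) = pev h v p * pev h v q"
proof -
  let ?K = "Poly_Mapping.keys p" and ?L = "Poly_Mapping.keys q"
  let ?lp = "Poly_Mapping.lookup p" and ?lq = "Poly_Mapping.lookup q"
  have "p * q = (\<Sum>\<alpha>\<in>?K. Poly_Mapping.single \<alpha> (?lp \<alpha>)) * (\<Sum>\<beta>\<in>?L. Poly_Mapping.single \<beta> (?lq \<beta>))"
    using poly_decomp[of p] poly_decomp[of q] by simp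
  also have "\<dots> = (\<Sum>\<alpha>\<in>?K. \<Sum>\<beta>\<in>?L. Poly_Mapping.single (\<alpha> + \<beta>) (?lp \<alpha> * ?lq \<beta>))"
    by (simp add: sum_product mult_single)
  finally have pq: "p * q = (\<Sum>\<alpha>\<in>?K. \<Sum>\<beta>\<in>?L. Poly_Mapping.single (\<alpha> + \<beta>) (?lp \<alpha> * ?lq \<beta>))" .
  have "pev h v (p * q) = (\<Sum>\<alpha>\<in>?K. \<Sum>\<beta>\<in>?L. h (?lp \<alpha> * ?lq \<beta>) * pmon v (\<alpha> + \<beta>))"
    unfolding pq by (simp add: pev_sum pev_single)
  also have "\<dots> = (\<Sum>\<alpha>\<in>?K. \<Sum>\<beta>\<in>?L. (h (?lp \<alpha>) * pmon v \<alpha>) * (h (?lq \<beta>) * pmon v \<beta>))"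
    by (simp add: H.hom_mult pmon_add mult_ac)
  also have "\<dots> = pev h v p * pev h v q"
    unfolding pev_def by (simp add: sum_product)
  finally show ?thesis .
qed

lemma pev_one: "pev h v 1 = 1"
  using pev_single[of v 0 1] by simp

lemma pev_hom: "comm_ring_hom (pev h v)"
  by unfold_locales (simp_all add: pev_zero pev_add pev_mult pev_one)

lemma pev_var: "pev h v (Poly_Mapping.single (Poly_Mapping.single i 1) 1) = v i"
  using pmon_single[of v i] by (simp add: pev_single)

lemma pev_const: "pev h v (Poly_Mapping.single 0 c) = h c"
  by (simp add: pev_single)

end

lemma of_rat_hom: "comm_ring_hom (of_rat :: rat \<Rightarrow> 'a::field_char_0)"
  by unfold_locales (simp_all add: of_rat_add of_rat_mult)

definition emb :: "mp \<Rightarrow> ratfun" where "emb p = Fract p 1"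

lemma emb_hom: "comm_ring_hom emb"
  by unfold_locales (simp_all add: emb_def Zero_fract_def One_fract_def)

lemma emb_eq_0: "emb p = 0 \<longleftrightarrow> p = 0"
  by (simp add: emb_def Zero_fract_def eq_fract)

lemma single0_hom: "comm_ring_hom (Poly_Mapping.single (0::nat \<Rightarrow>\<^sub>0 nat) :: rat \<Rightarrow> mp)"
  by unfold_locales (simp_all add: single_add mult_single)

lemma rf_const_emb: "rf_const q = emb (Poly_Mapping.single 0 q)"
  by (simp add: rf_const_def emb_def)

lemma rf_var_emb: "rf_var i = emb (Poly_Mapping.single (Poly_Mapping.single i 1) 1)"
  by (simp add: rf_var_def emb_def)

lemma rf_const_hom: "comm_ring_hom rf_const"
proof -
  interpret E: comm_ring_hom emb by (rule emb_hom)
  interpret S: comm_ring_hom "Poly_Mapping.single (0::nat \<Rightarrow>\<^sub>0 nat) :: rat \<Rightarrow> mp" by (rule single0_hom)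
  show ?thesis
    by unfold_locales (simp_all add: rf_const_emb E.hom_add E.hom_mult S.hom_add S.hom_mult)
qed

definition vb :: "nat \<Rightarrow> mp \<Rightarrow> bool" where
  "vb r p \<longleftrightarrow> (\<forall>\<alpha>\<in>Poly_Mapping.keys p. Poly_Mapping.keys \<alpha> \<subseteq> {..<r})"

lemma vb_add: "vb r p \<Longrightarrow> vb r q \<Longrightarrow> vb r (p + q)"
  unfolding vb_def using keys_add[of p q] by blast

lemma vb_mult:
  assumes "vb r p" "vb r q" shows "vb r (p * q)"
  unfolding vb_def
proof
  fix \<gamma> assume "\<gamma> \<in> Poly_Mapping.keys (p * q)"
  then obtain a b where ab: "\<gamma> = a + b" "a \<in> Poly_Mapping.keys p" "b \<in> Poly_Mapping.keys q"
    using keys_mult[of p q] by blast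
  have "Poly_Mapping.keys \<gamma> \<subseteq> Poly_Mapping.keys a \<union> Poly_Mapping.keys b"
    unfolding ab(1) by (rule keys_add)
  then show "Poly_Mapping.keys \<gamma> \<subseteq> {..<r}" using assms ab unfolding vb_def by blast
qed

lemma vb_const: "vb r (Poly_Mapping.single 0 c)"
  unfolding vb_def by simp

lemma vb_var: "i < r \<Longrightarrow> vb r (Poly_Mapping.single (Poly_Mapping.single i 1) c)"
  unfolding vb_def by simp

lemma vb_zero: "vb r 0" unfolding vb_def by simp

lemma vb_one: "vb r 1" unfolding vb_def by simp

lemma vb_sum: "(\<And>a. a \<in> A \<Longrightarrow> vb r (f a)) \<Longrightarrow> vb r (sum f A)"
  by (induction A rule: infinite_finite_induct) (simp_all add: vb_zero vb_add)

lemma vb_prod: "(\<And>a. a \<in> A \<Longrightarrow> vb r (f a)) \<Longrightarrow> vb r (prod f A)"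
  by (induction A rule: infinite_finite_induct) (simp_all add: vb_one vb_mult)

lemma vb_of_int: "vb r (of_int k)"
proof -
  have "(of_int k :: mp) = Poly_Mapping.single 0 (of_int k)" by simp
  then show ?thesis using vb_const by metis
qed

lemma vb_det:
  assumes "\<And>i j. i < dim_row X \<Longrightarrow> j < dim_col X \<Longrightarrow> vb r (X $$ (i, j))"
  shows "vb r (det X)"
proof (cases "dim_row X = dim_col X")
  case True
  show ?thesis unfolding det_def using True
  proof (simp, intro vb_sum vb_mult vb_of_int vb_prod)
    fix p i assume p: "p \<in> {p. p permutes {0..<dim_col X}}" and i: "i \<in> {0..<dim_col X}"
    then have "p i < dim_col X" by (auto simp: permutes_in_image)
    then show "vb r (X $$ (i, p i))" using i True assms by auto
  qed
next
  case False
  then show ?thesis by (simp add: det_def vb_zero)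
qed

lemma alg_indep_0: "alg_indep 0 y"
  unfolding alg_indep_def
proof (intro allI impI)
  fix p :: mp
  assume k: "\<forall>\<alpha>\<in>Poly_Mapping.keys p. Poly_Mapping.keys \<alpha> \<subseteq> {..<0}" and e: "mpoly_eval p y = 0"
  have kp: "Poly_Mapping.keys p \<subseteq> {0}" using k by auto
  have "mpoly_eval p y = of_rat (Poly_Mapping.lookup p 0)"
    unfolding mpoly_eval_pev using pev_superset[OF of_rat_hom, of "{0}" p y] kp by simp
  then have "Poly_Mapping.lookup p 0 = 0" using e by simp
  then have "0 \<notin> Poly_Mapping.keys p" by (simp add: in_keys_iff)
  with kp have kp0: "Poly_Mapping.keys p = {}" by blast
  show "p = 0"
  proof (rule poly_mapping_eqI)
    fix \<alpha>
    have "\<alpha> \<notin> Poly_Mapping.keys p" using kp0 by blast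
    then show "Poly_Mapping.lookup p \<alpha> = Poly_Mapping.lookup 0 \<alpha>"
      by (simp add: not_in_keys_iff_lookup_eq_zero)
  qed
qed

lemma map_submatrix: "submatrix (map_mat f A) I J = map_mat f (submatrix A I J)"
proof (rule eq_matI)
  show "dim_row (submatrix (map_mat f A) I J) = dim_row (map_mat f (submatrix A I J))"
    by (simp add: dim_submatrix)
  show "dim_col (submatrix (map_mat f A) I J) = dim_col (map_mat f (submatrix A I J))"
    by (simp add: dim_submatrix)
  fix i j assume i: "i < dim_row (map_mat f (submatrix A I J))" and j: "j < dim_col (map_mat f (submatrix A I J))"
  have i': "i < card {i. i < dim_row A \<and> i \<in> I}" and j': "j < card {j. j < dim_col A \<and> j \<in> J}"
    using i j by (simp_all add: dim_submatrix)
  have "submatrix (map_mat f A) I J $$ (i, j) = map_mat f A $$ (pick I i, pick J j)"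
    by (rule submatrix_index) (use i' j' in simp_all)
  also have "\<dots> = f (A $$ (pick I i, pick J j))"
    using pick_le[OF i'] pick_le[OF j'] by simp
  also have "\<dots> = f (submatrix A I J $$ (i, j))"
    by (subst submatrix_index) (use i' j' in simp_all)
  also have "\<dots> = map_mat f (submatrix A I J) $$ (i, j)" using i j by simp
  finally show "submatrix (map_mat f A) I J $$ (i, j) = map_mat f (submatrix A I J) $$ (i, j)" .
qed

lemma pev_lin:
  assumes h: "comm_ring_hom h"
  shows "pev h v ((\<Sum>i<r. Poly_Mapping.single (Poly_Mapping.single i 1) (a i)) + Poly_Mapping.single 0 c)
       = (\<Sum>i<r. h (a i) * v i) + h c"
proof -
  interpret P: comm_ring_hom "pev h v" by (rule pev_hom[OF h])
  have "pev h v (Poly_Mapping.single (Poly_Mapping.single i 1) (a i)) = h (a i) * v i" for i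
    using pmon_single[of v i] by (simp add: pev_single[OF h])
  then show ?thesis by (simp add: P.hom_add P.hom_sum pev_const[OF h])
qed

lemma vb_lin: "vb r ((\<Sum>i<r. Poly_Mapping.single (Poly_Mapping.single i 1) (a i)) + Poly_Mapping.single 0 c)"
  by (intro vb_add vb_sum vb_var vb_const) simp

lemma core:
  fixes M :: "complex mat" and \<Phi> :: "complex \<Rightarrow> ratfun" and b :: "nat \<Rightarrow> complex"
    and cf :: "complex \<Rightarrow> nat \<Rightarrow> rat" and c0 :: "complex \<Rightarrow> rat" and t :: ratfun
  assumes M: "M \<in> carrier_mat m n"
    and alg: "alg_indep r b"
    and dec: "\<And>p q. p < m \<Longrightarrow> q < n \<Longrightarrow>
       M $$ (p,q) = (\<Sum>i<r. of_rat (cf (M $$ (p,q)) i) * b i) + of_rat (c0 (M $$ (p,q)))"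
    and phi: "\<And>p q. p < m \<Longrightarrow> q < n \<Longrightarrow>
       \<Phi> (M $$ (p,q)) = (\<Sum>i<r. rf_const (cf (M $$ (p,q)) i) * \<Phi> (b i)) + rf_const (c0 (M $$ (p,q))) * t"
    and t: "t \<noteq> 0"
    and d: "det (submatrix M I J) = 0"
  shows "det (submatrix (map_mat \<Phi> M) I J) = 0"
proof -
  define lin :: "complex \<Rightarrow> mp" where "lin e = (\<Sum>i<r. Poly_Mapping.single (Poly_Mapping.single i 1) (cf e i)) + Poly_Mapping.single 0 (c0 e)" for e
  define N where "N = map_mat lin M"
  define w where "w i = \<Phi> (b i) / t" for i
  interpret P1: comm_ring_hom "pev of_rat b" by (rule pev_hom[OF of_rat_hom])
  interpret P2: comm_ring_hom "pev rf_const w" by (rule pev_hom[OF rf_const_hom])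
  interpret RC: comm_ring_hom rf_const by (rule rf_const_hom)
  have e1: "map_mat (pev of_rat b) N = M"
  proof (rule eq_matI)
    fix p q assume "p < dim_row M" "q < dim_col M"
    then have pq: "p < m" "q < n" using M by auto
    show "map_mat (pev of_rat b) N $$ (p, q) = M $$ (p, q)"
      using pq M dec[OF pq] by (simp add: N_def lin_def pev_lin[OF of_rat_hom, simplified])
  qed (use M in \<open>auto simp: N_def\<close>)
  have e2: "map_mat (pev rf_const w) N = map_mat (\<lambda>x. inverse t * x) (map_mat \<Phi> M)"
  proof (rule eq_matI)
    fix p q assume "p < dim_row (map_mat (\<lambda>x. inverse t * x) (map_mat \<Phi> M))"
      "q < dim_col (map_mat (\<lambda>x. inverse t * x) (map_mat \<Phi> M))"
    then have pq: "p < m" "q < n" using M by auto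
    have "map_mat (pev rf_const w) N $$ (p, q) = (\<Sum>i<r. rf_const (cf (M $$ (p,q)) i) * w i) + rf_const (c0 (M $$ (p,q)))"
      using pq M by (simp add: N_def lin_def pev_lin[OF rf_const_hom, simplified])
    also have "\<dots> = inverse t * ((\<Sum>i<r. rf_const (cf (M $$ (p,q)) i) * \<Phi> (b i)) + rf_const (c0 (M $$ (p,q))) * t)"
      using t by (simp add: w_def field_simps sum_distrib_left sum_divide_distrib)
    also have "\<dots> = inverse t * \<Phi> (M $$ (p,q))" using phi[OF pq] by simp
    also have "\<dots> = map_mat (\<lambda>x. inverse t * x) (map_mat \<Phi> M) $$ (p, q)" using pq M by simp
    finally show "map_mat (pev rf_const w) N $$ (p, q) = map_mat (\<lambda>x. inverse t * x) (map_mat \<Phi> M) $$ (p, q)" .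
  qed (use M in \<open>auto simp: N_def\<close>)
  define D where "D = det (submatrix N I J)"
  have "vb r D"
    unfolding D_def N_def map_submatrix
    by (rule vb_det) (simp add: lin_def vb_lin[simplified])
  moreover have "mpoly_eval D b = 0"
  proof -
    have "mpoly_eval D b = pev of_rat b D" by (rule mpoly_eval_pev)
    also have "\<dots> = det (map_mat (pev of_rat b) (submatrix N I J))" unfolding D_def by simp
    also have "\<dots> = det (submatrix M I J)" by (simp add: map_submatrix[symmetric] e1)
    finally show ?thesis using d by simp
  qed
  ultimately have D0: "D = 0" using alg unfolding alg_indep_def vb_def by blast
  have "0 = pev rf_const w D" using D0 by simp
  also have "\<dots> = det (map_mat (pev rf_const w) (submatrix N I J))" unfolding D_def by simp
  also have "\<dots> = det (submatrix (map_mat (\<lambda>x. inverse t * x) (map_mat \<Phi> M)) I J)"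
    by (simp add: map_submatrix[symmetric] e2)
  also have "\<dots> = det (inverse t \<cdot>\<^sub>m submatrix (map_mat \<Phi> M) I J)"
    by (simp add: map_submatrix smult_mat_def)
  also have "\<dots> = inverse t ^ dim_col (submatrix (map_mat \<Phi> M) I J) * det (submatrix (map_mat \<Phi> M) I J)"
    by (rule det_smult)
  finally show ?thesis using t by simp
qed

lemma transfer2:
  fixes M :: "complex mat" and l :: "nat \<Rightarrow> complex" and Ms :: "nat \<Rightarrow> rat mat"
  assumes M: "M \<in> carrier_mat m n"
    and dec: "\<And>p q. p < m \<Longrightarrow> q < n \<Longrightarrow> M $$ (p,q) = (\<Sum>i<k. l i * of_rat (Ms i $$ (p,q)))"
    and G: "G = mat m n (\<lambda>(p, q). \<Sum>i<k. rf_var i * rf_const (Ms i $$ (p, q)))"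
    and d: "det (submatrix M I J) \<noteq> 0"
  shows "det (submatrix G I J) \<noteq> 0"
proof -
  define Gp :: "mp mat" where "Gp = mat m n (\<lambda>(p, q). \<Sum>i<k. Poly_Mapping.single (Poly_Mapping.single i 1) 1 * Poly_Mapping.single 0 (Ms i $$ (p, q)))"
  interpret E: comm_ring_hom emb by (rule emb_hom)
  interpret P: comm_ring_hom "pev of_rat l" by (rule pev_hom[OF of_rat_hom])
  have g: "map_mat emb Gp = G"
    unfolding G Gp_def by (rule eq_matI) (auto simp: E.hom_sum E.hom_mult rf_var_emb rf_const_emb)
  have mm: "map_mat (pev of_rat l) Gp = M"
  proof (rule eq_matI)
    fix p q assume "p < dim_row M" "q < dim_col M"
    then have pq: "p < m" "q < n" using M by auto
    show "map_mat (pev of_rat l) Gp $$ (p, q) = M $$ (p, q)"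
      using pq dec[OF pq] by (simp add: Gp_def P.hom_sum P.hom_mult pev_var[OF of_rat_hom, simplified] pev_const[OF of_rat_hom] mult.commute)
  qed (use M in \<open>auto simp: Gp_def\<close>)
  have "det (submatrix G I J) = emb (det (submatrix Gp I J))"
    by (simp add: g[symmetric] map_submatrix)
  moreover have "det (submatrix M I J) = pev of_rat l (det (submatrix Gp I J))"
    by (simp add: mm[symmetric] map_submatrix)
  ultimately show ?thesis using d emb_eq_0 P.hom_zero by metis
qed

interpretation QC: vector_space "\<lambda>(c::rat) (z::complex). of_rat c * z"
  by unfold_locales (simp_all add: algebra_simps of_rat_add of_rat_mult)

lemma qspan_eq: "qspan A = QC.span A"
  unfolding qspan_def QC.span_explicit by auto

lemma q_indep_iff:
  assumes inj: "inj_on l {..<k}"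
  shows "q_indep k l \<longleftrightarrow> QC.independent (l ` {..<k})"
proof
  assume q: "q_indep k l"
  have "\<not> (\<exists>u. (\<exists>v\<in>l ` {..<k}. u v \<noteq> 0) \<and> (\<Sum>v\<in>l ` {..<k}. of_rat (u v) * v) = 0)"
  proof
    assume "\<exists>u. (\<exists>v\<in>l ` {..<k}. u v \<noteq> 0) \<and> (\<Sum>v\<in>l ` {..<k}. of_rat (u v) * v) = 0"
    then obtain u v where v: "v \<in> l ` {..<k}" and uv: "u v \<noteq> 0"
      and s: "(\<Sum>v\<in>l ` {..<k}. of_rat (u v) * v) = 0" by blast
    have "(\<Sum>i<k. of_rat (u (l i)) * l i) = (\<Sum>v\<in>l ` {..<k}. of_rat (u v) * v)"
      by (simp add: sum.reindex[OF inj])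
    then have "(\<Sum>i<k. of_rat (u (l i)) * l i) = 0" using s by simp
    moreover have "(\<Sum>i<k. of_rat (u (l i)) * l i) = 0 \<longrightarrow> (\<forall>i<k. u (l i) = 0)"
      using spec[OF q[unfolded q_indep_def], of "\<lambda>i. u (l i)"] by blast
    ultimately have "\<forall>i<k. u (l i) = 0" by blast
    moreover from v obtain i where "i < k" "v = l i" by blast
    ultimately show False using uv by simp
  qed
  then show "QC.independent (l ` {..<k})"
    using QC.dependent_finite[OF finite_imageI[OF finite_lessThan], of l k] by simp
next
  assume ind: "QC.independent (l ` {..<k})"
  show "q_indep k l"
    unfolding q_indep_def
  proof (intro allI impI)
    fix c :: "nat \<Rightarrow> rat" and i assume s: "(\<Sum>i<k. of_rat (c i) * l i) = 0" and i: "i < k"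
    define u where "u v = c (the_inv_into {..<k} l v)" for v
    have ul: "u (l j) = c j" if "j < k" for j
      unfolding u_def using the_inv_into_f_f[OF inj] that by simp
    have "(\<Sum>v\<in>l ` {..<k}. of_rat (u v) * v) = (\<Sum>j<k. of_rat (u (l j)) * l j)"
      by (simp add: sum.reindex[OF inj])
    also have "\<dots> = (\<Sum>j<k. of_rat (c j) * l j)" by (rule sum.cong) (simp_all add: ul)
    finally have "(\<Sum>v\<in>l ` {..<k}. of_rat (u v) * v) = 0" using s by simp
    moreover have "\<not> (\<exists>u. (\<exists>v\<in>l ` {..<k}. u v \<noteq> 0) \<and> (\<Sum>v\<in>l ` {..<k}. of_rat (u v) * v) = 0)"
      using ind QC.dependent_finite[OF finite_imageI[OF finite_lessThan], of l k] by simp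
    ultimately have "\<forall>v\<in>l ` {..<k}. u v = 0" by blast
    then show "c i = 0" using ul[OF i] i by auto
  qed
qed

lemma q_indep_inj:
  assumes q: "q_indep k l"
  shows "inj_on l {..<k}"
proof (rule inj_onI, rule ccontr)
  fix i j assume i: "i \<in> {..<k}" and j: "j \<in> {..<k}" and e: "l i = l j" and ij: "i \<noteq> j"
  define c where "c x = (if x = i then 1 else 0) - (if x = j then 1 else (0::rat))" for x
  have pw: "of_rat (c x) * l x = (if x = i then l x else 0) - (if x = j then l x else 0)" for x
    using ij by (cases "x = i"; cases "x = j") (simp_all add: c_def)
  have "(\<Sum>x<k. of_rat (c x) * l x) = (\<Sum>x<k. (if x = i then l x else 0)) - (\<Sum>x<k. (if x = j then l x else 0))"
    by (simp only: pw sum_subtractf)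
  also have "\<dots> = 0" using i j e by simp
  finally have "c i = 0" using q i unfolding q_indep_def by blast
  then show False using ij by (simp add: c_def)
qed

lemma in_span_finite:
  assumes "x \<in> QC.span S"
  shows "\<exists>T. finite T \<and> T \<subseteq> S \<and> x \<in> QC.span T"
proof -
  from assms obtain t r where t: "finite t" "t \<subseteq> S" "x = (\<Sum>a\<in>t. of_rat (r a) * a)"
    unfolding QC.span_explicit by auto
  have "x \<in> QC.span t" unfolding t(3)
    by (rule QC.span_sum) (simp add: QC.span_scale[simplified] QC.span_base)
  with t show ?thesis by blast
qed

lemma mat_entries_finite: "finite (mat_entries M)"
proof -
  have "mat_entries M = (\<lambda>(i,j). M $$ (i,j)) ` ({..<dim_row M} \<times> {..<dim_col M})"
    unfolding mat_entries_def by auto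
  then show ?thesis by simp
qed

lemma decomp_exists:
  fixes M :: "complex mat"
  shows "\<exists>k l Ms. struct_decomp M k l Ms"
proof -
  let ?E = "mat_entries M"
  obtain B where B: "B \<subseteq> ?E" "QC.independent B" "?E \<subseteq> QC.span B"
    using QC.maximal_independent_subset[of ?E] by blast
  have fB: "finite B" using finite_subset[OF B(1) mat_entries_finite] .
  obtain l where l: "bij_betw l {..<card B} B"
    using ex_bij_betw_nat_finite[OF fB] by (auto simp: lessThan_atLeast0)
  define k where "k = card B"
  have inj: "inj_on l {..<k}" and im: "l ` {..<k} = B" using l unfolding k_def bij_betw_def by auto
  define Ms where "Ms i = mat (dim_row M) (dim_col M) (\<lambda>(p,q). QC.representation B (M $$ (p,q)) (l i))" for i
  have "struct_decomp M k l Ms"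
    unfolding struct_decomp_def
  proof (intro conjI allI impI)
    show "q_indep k l" using q_indep_iff[OF inj] im B(2) by simp
    have "B \<subseteq> QC.span ?E" using B(1) QC.span_superset by blast
    then have "QC.span B = QC.span ?E" by (subst QC.span_eq) (use B(3) in blast)
    then show "qspan (l ` {..<k}) = qspan ?E" using im by (simp add: qspan_eq)
    fix i assume "i < k"
    show "Ms i \<in> carrier_mat (dim_row M) (dim_col M)" by (simp add: Ms_def)
  next
    show "M = mat (dim_row M) (dim_col M) (\<lambda>(r, c). \<Sum>i<k. l i * of_rat (Ms i $$ (r, c)))"
    proof (rule eq_matI)
      fix p q assume p: "p < dim_row (mat (dim_row M) (dim_col M) (\<lambda>(r, c). \<Sum>i<k. l i * of_rat (Ms i $$ (r, c))))"
        and q: "q < dim_col (mat (dim_row M) (dim_col M) (\<lambda>(r, c). \<Sum>i<k. l i * of_rat (Ms i $$ (r, c))))"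
      then have p': "p < dim_row M" and q': "q < dim_col M" by auto
      let ?e = "M $$ (p,q)"
      have "?e \<in> ?E" unfolding mat_entries_def using p' q' by blast
      then have eE: "?e \<in> QC.span B" using B(3) by blast
      have "(\<Sum>i<k. l i * of_rat (Ms i $$ (p, q))) = (\<Sum>i<k. of_rat (QC.representation B ?e (l i)) * l i)"
        using p' q' by (simp add: Ms_def mult.commute)
      also have "\<dots> = (\<Sum>v\<in>B. of_rat (QC.representation B ?e v) * v)"
        unfolding im[symmetric] by (simp add: sum.reindex[OF inj])
      also have "\<dots> = ?e"
        using QC.sum_representation_eq[OF B(2) eE fB order.refl] by simp
      finally show "M $$ (p, q) = mat (dim_row M) (dim_col M) (\<lambda>(r, c). \<Sum>i<k. l i * of_rat (Ms i $$ (r, c))) $$ (p, q)"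
        using p' q' by simp
    qed auto
  qed
  then show ?thesis by blast
qed

lemma in_span_of_rat: "(of_rat q :: complex) \<in> QC.span S" if "1 \<in> QC.span S"
proof -
  have "of_rat q * 1 \<in> QC.span S" using QC.span_scale[OF that, of q] by simp
  then show ?thesis by simp
qed

lemma transfer1:
  fixes M :: "complex mat" and l :: "nat \<Rightarrow> complex" and Ms :: "nat \<Rightarrow> rat mat"
  assumes hyp: "\<forall>n\<ge>1. \<forall>y :: nat \<Rightarrow> complex. (\<forall>i<n. y i \<in> Lset) \<and> q_indep n y \<longrightarrow> alg_indep n y"
    and M: "M \<in> carrier_mat m n"
    and ent: "\<forall>i<m. \<forall>j<n. M $$ (i, j) \<in> qspan (Lset \<union> \<rat>)"
    and sd: "struct_decomp M k l Ms"
  shows "\<exists>\<Phi>. map_mat \<Phi> M = mat m n (\<lambda>(p, q). \<Sum>i<k. rf_var i * rf_const (Ms i $$ (p, q))) \<and>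
     (\<forall>I J. det (submatrix M I J) = 0 \<longrightarrow> det (submatrix (map_mat \<Phi> M) I J) = 0)"
proof -
  let ?E = "mat_entries M"
  have Esp: "\<forall>e\<in>?E. e \<in> QC.span (Lset \<union> \<rat>)"
    using ent M unfolding mat_entries_def qspan_eq by auto
  then have "\<forall>e\<in>?E. \<exists>T. finite T \<and> T \<subseteq> Lset \<union> \<rat> \<and> e \<in> QC.span T"
    using in_span_finite by blast
  then obtain Tf where Tf: "\<forall>e\<in>?E. finite (Tf e) \<and> Tf e \<subseteq> Lset \<union> \<rat> \<and> e \<in> QC.span (Tf e)"
    by (rule bchoice[elim_format]) blast
  define Gs where "Gs = (\<Union>e\<in>?E. Tf e) \<inter> Lset"
  have "finite (\<Union>e\<in>?E. Tf e)" using Tf mat_entries_finite by (intro finite_UN_I) auto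
  then have fGs: "finite Gs" unfolding Gs_def by simp
  obtain B0 where B0: "B0 \<subseteq> Gs" "QC.independent B0" "Gs \<subseteq> QC.span B0"
    using QC.maximal_independent_subset[of Gs] by blast
  have fB0: "finite B0" using finite_subset[OF B0(1) fGs] .
  define r where "r = card B0"
  obtain b where bb: "bij_betw b {..<r} B0"
    using ex_bij_betw_nat_finite[OF fB0] by (auto simp: lessThan_atLeast0 r_def)
  have injb: "inj_on b {..<r}" and imb: "b ` {..<r} = B0" using bb unfolding bij_betw_def by auto
  have bL: "\<forall>i<r. b i \<in> Lset" using imb B0(1) unfolding Gs_def by auto
  have qb: "q_indep r b" using q_indep_iff[OF injb] imb B0(2) by simp
  have alg: "alg_indep r b"
  proof (cases "r = 0")
    case True then show ?thesis using alg_indep_0 by simp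
  next
    case False then show ?thesis using hyp bL qb by auto
  qed
  interpret PB: comm_ring_hom "pev of_rat b" by (rule pev_hom[OF of_rat_hom])
  have one_notin: "1 \<notin> QC.span B0"
  proof
    assume "1 \<in> QC.span B0"
    then obtain u where u: "1 = (\<Sum>v\<in>B0. of_rat (u v) * v)"
      unfolding QC.span_finite[OF fB0] by auto
    then have u': "(\<Sum>i<r. of_rat (u (b i)) * b i) = 1"
      unfolding imb[symmetric] by (simp add: sum.reindex[OF injb])
    define Pq :: mp where "Pq = (\<Sum>i<r. Poly_Mapping.single (Poly_Mapping.single i 1) (u (b i))) + Poly_Mapping.single 0 (-1)"
    have "vb r Pq" unfolding Pq_def by (rule vb_lin)
    moreover have "mpoly_eval Pq b = 0"
      unfolding mpoly_eval_pev Pq_def pev_lin[OF of_rat_hom] using u' by simp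
    ultimately have "Pq = 0" using alg unfolding alg_indep_def vb_def by blast
    moreover have "pev of_rat (\<lambda>_. 0::complex) Pq = -1"
      unfolding Pq_def pev_lin[OF of_rat_hom] by simp
    ultimately show False using pev_zero[OF of_rat_hom, of "\<lambda>_. 0::complex"] by simp
  qed
  define B' where "B' = insert 1 B0"
  have one_B0: "1 \<notin> B0" using one_notin QC.span_superset by blast
  have indB': "QC.independent B'" unfolding B'_def using one_B0 one_notin B0(2)
    by (simp add: QC.independent_insert)
  have fB': "finite B'" unfolding B'_def using fB0 by simp
  have one_B': "1 \<in> QC.span B'" unfolding B'_def by (rule QC.span_base) simp
  have B0B': "QC.span B0 \<subseteq> QC.span B'" unfolding B'_def by (rule QC.span_mono) blast
  have EB': "?E \<subseteq> QC.span B'"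
  proof
    fix e assume e: "e \<in> ?E"
    have "Tf e \<subseteq> QC.span B'"
    proof
      fix x assume x: "x \<in> Tf e"
      then have "x \<in> Lset \<union> \<rat>" using Tf e by blast
      then show "x \<in> QC.span B'"
      proof
        assume "x \<in> Lset"
        then have "x \<in> Gs" unfolding Gs_def using x e by blast
        then show ?thesis using B0(3) B0B' by blast
      next
        assume "x \<in> \<rat>"
        then obtain q where "x = of_rat q" by (auto elim: Rats_cases)
        then show ?thesis using in_span_of_rat[OF one_B'] by simp
      qed
    qed
    then have "QC.span (Tf e) \<subseteq> QC.span B'" by (rule QC.span_minimal) simp
    then show "e \<in> QC.span B'" using Tf e by blast
  qed
  define Ls where "Ls = l ` {..<k}"
  have ql: "q_indep k l" using sd unfolding struct_decomp_def by blast
  have injl: "inj_on l {..<k}" using q_indep_inj[OF ql] .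
  have indL: "QC.independent Ls" using q_indep_iff[OF injl] ql unfolding Ls_def by simp
  have "QC.span Ls = QC.span ?E" using sd unfolding struct_decomp_def Ls_def qspan_eq by blast
  then have LsB': "Ls \<subseteq> QC.span B'"
    using QC.span_superset[of Ls] QC.span_minimal[OF EB'] by auto
  define S0 where "S0 = (if 1 \<in> QC.span Ls then Ls else insert 1 Ls)"
  have indS0: "QC.independent S0"
  proof (cases "1 \<in> QC.span Ls")
    case True then show ?thesis using indL by (simp add: S0_def)
  next
    case False
    then have "1 \<notin> Ls" using QC.span_superset by blast
    then show ?thesis using False indL by (simp add: S0_def QC.independent_insert)
  qed
  have S0B': "S0 \<subseteq> QC.span B'" using LsB' one_B' by (auto simp: S0_def)
  obtain Bl where Bl: "S0 \<subseteq> Bl" "Bl \<subseteq> QC.span B'" "QC.independent Bl" "QC.span B' \<subseteq> QC.span Bl"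
    using QC.maximal_independent_subset_extend[OF S0B' indS0] by blast
  have fBl: "finite Bl" using QC.independent_span_bound[OF fB' Bl(3) Bl(2)] by blast
  have LsBl: "Ls \<subseteq> Bl" using Bl(1) by (auto simp: S0_def split: if_splits)
  define f where "f \<beta> = (if \<beta> \<in> Ls then rf_var (the_inv_into {..<k} l \<beta>) else if \<beta> = 1 then 1 else 0)" for \<beta>
  define \<Phi> where "\<Phi> x = (\<Sum>\<beta>\<in>Bl. rf_const (QC.representation Bl x \<beta>) * f \<beta>)" for x
  interpret RC: comm_ring_hom rf_const by (rule rf_const_hom)
  have \<Phi>add: "\<Phi> (x + y) = \<Phi> x + \<Phi> y" if "x \<in> QC.span Bl" "y \<in> QC.span Bl" for x y
    unfolding \<Phi>_def QC.representation_add[OF Bl(3) that(2) that(1)]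
    by (simp add: RC.hom_add distrib_right sum.distrib)
  have \<Phi>scale: "\<Phi> (of_rat c * x) = rf_const c * \<Phi> x" if "x \<in> QC.span Bl" for x c
  proof -
    have "QC.representation Bl (of_rat c * x) = (\<lambda>\<beta>. c * QC.representation Bl x \<beta>)"
      using QC.representation_scale[OF Bl(3) that, of c] by simp
    then show ?thesis unfolding \<Phi>_def by (simp only: RC.hom_mult sum_distrib_left mult.assoc)
  qed
  have \<Phi>zero: "\<Phi> 0 = 0" unfolding \<Phi>_def by (simp add: QC.representation_zero)
  have \<Phi>sum: "\<Phi> (sum g A) = (\<Sum>a\<in>A. \<Phi> (g a))" if "\<And>a. a \<in> A \<Longrightarrow> g a \<in> QC.span Bl" for g and A :: "'x set"
    using that
  proof (induction A rule: infinite_finite_induct)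
    case (infinite A) then show ?case by (simp add: \<Phi>zero)
  next
    case empty then show ?case by (simp add: \<Phi>zero)
  next
    case (insert a A)
    have "g a \<in> QC.span Bl" using insert.prems by simp
    moreover have "sum g A \<in> QC.span Bl" using insert.prems by (intro QC.span_sum) simp
    ultimately show ?case using insert by (simp add: \<Phi>add)
  qed
  have \<Phi>basis: "\<Phi> \<beta> = f \<beta>" if "\<beta> \<in> Bl" for \<beta>
  proof -
    have "\<Phi> \<beta> = (\<Sum>v\<in>Bl. (if v = \<beta> then f v else 0))"
      unfolding \<Phi>_def QC.representation_basis[OF Bl(3) that]
      by (rule sum.cong) (simp_all add: RC.hom_one RC.hom_zero)
    also have "\<dots> = f \<beta>" using that fBl by simp
    finally show ?thesis .
  qed
  have spBl: "x \<in> QC.span Bl" if "x \<in> QC.span B'" for x using that Bl(4) by blast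
  have \<Phi>l: "\<Phi> (l i) = rf_var i" if "i < k" for i
  proof -
    have "l i \<in> Ls" using that by (simp add: Ls_def)
    then have "\<Phi> (l i) = f (l i)" using \<Phi>basis LsBl by blast
    also have "\<dots> = rf_var i" using \<open>l i \<in> Ls\<close> the_inv_into_f_f[OF injl] that by (simp add: f_def)
    finally show ?thesis .
  qed
  have lsp: "l i \<in> QC.span Bl" if "i < k" for i
    using that LsBl QC.span_superset unfolding Ls_def by blast
  have \<Phi>1: "\<Phi> 1 \<noteq> 0"
  proof (cases "1 \<in> QC.span Ls")
    case False
    then have "1 \<in> Bl" "1 \<notin> Ls" using Bl(1) QC.span_superset by (auto simp: S0_def)
    then show ?thesis using \<Phi>basis by (simp add: f_def)
  next
    case True
    have fLs: "finite Ls" unfolding Ls_def by simp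
    obtain u where u: "1 = (\<Sum>v\<in>Ls. of_rat (u v) * v)"
      using True unfolding QC.span_finite[OF fLs] by auto
    then have u': "1 = (\<Sum>i<k. of_rat (u (l i)) * l i)"
      unfolding Ls_def by (simp add: sum.reindex[OF injl])
    have "\<Phi> 1 = (\<Sum>i<k. \<Phi> (of_rat (u (l i)) * l i))"
      by (subst u') (rule \<Phi>sum, intro QC.span_scale[simplified] lsp, simp)
    also have "\<dots> = (\<Sum>i<k. rf_const (u (l i)) * rf_var i)"
      by (rule sum.cong) (simp_all add: \<Phi>scale lsp \<Phi>l)
    finally have e1: "\<Phi> 1 = (\<Sum>i<k. rf_const (u (l i)) * rf_var i)" .
    define P1 :: mp where "P1 = (\<Sum>i<k. Poly_Mapping.single (Poly_Mapping.single i 1) 1 * Poly_Mapping.single 0 (u (l i)))"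
    interpret E: comm_ring_hom emb by (rule emb_hom)
    interpret PL: comm_ring_hom "pev of_rat l" by (rule pev_hom[OF of_rat_hom])
    have "emb P1 = (\<Sum>i<k. rf_const (u (l i)) * rf_var i)"
      unfolding P1_def by (simp add: E.hom_sum E.hom_mult rf_var_emb rf_const_emb mult.commute)
    moreover have "pev of_rat l P1 = 1"
      unfolding P1_def using u'
      by (simp add: PL.hom_sum PL.hom_mult pev_var[OF of_rat_hom, simplified] pev_const[OF of_rat_hom] mult.commute)
    then have "P1 \<noteq> 0" by auto
    then have "emb P1 \<noteq> 0" using emb_eq_0 by simp
    ultimately show ?thesis using e1 by simp
  qed
  define cf where "cf e i = QC.representation B' e (b i)" for e i
  define c0 where "c0 e = QC.representation B' e 1" for e
  have B'eq: "B' = insert 1 (b ` {..<r})" unfolding B'_def imb ..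
  have one_b: "1 \<notin> b ` {..<r}" using one_B0 imb by simp
  have dec: "e = (\<Sum>i<r. of_rat (cf e i) * b i) + of_rat (c0 e)" if e: "e \<in> QC.span B'" for e
  proof -
    have "e = (\<Sum>\<beta>\<in>B'. of_rat (QC.representation B' e \<beta>) * \<beta>)"
      using QC.sum_representation_eq[OF indB' e fB' order.refl] by simp
    also have "\<dots> = of_rat (c0 e) * 1 + (\<Sum>\<beta>\<in>b ` {..<r}. of_rat (QC.representation B' e \<beta>) * \<beta>)"
      unfolding B'eq using one_b fB0 imb by (simp add: c0_def B'eq)
    also have "\<dots> = of_rat (c0 e) + (\<Sum>i<r. of_rat (cf e i) * b i)"
      by (simp add: sum.reindex[OF injb] cf_def)
    finally show ?thesis by (simp add: add.commute)
  qed
  have phi: "\<Phi> e = (\<Sum>i<r. rf_const (cf e i) * \<Phi> (b i)) + rf_const (c0 e) * \<Phi> 1" if e: "e \<in> QC.span B'" for e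
  proof -
    have bsp: "b i \<in> QC.span Bl" if "i < r" for i
    proof -
      have "b i \<in> B'" unfolding B'eq using that by simp
      then show ?thesis using spBl QC.span_superset by blast
    qed
    have "\<Phi> e = \<Phi> ((\<Sum>i<r. of_rat (cf e i) * b i) + of_rat (c0 e) * 1)"
      using dec[OF e] by simp
    also have "\<dots> = (\<Sum>i<r. \<Phi> (of_rat (cf e i) * b i)) + \<Phi> (of_rat (c0 e) * 1)"
    proof -
      have s1: "(\<Sum>i<r. of_rat (cf e i) * b i) \<in> QC.span Bl"
        by (intro QC.span_sum QC.span_scale[simplified] bsp) simp
      have s2: "of_rat (c0 e) * 1 \<in> QC.span Bl"
        using spBl[OF one_B'] by (intro QC.span_scale[simplified])
      have s3: "\<Phi> (\<Sum>i<r. of_rat (cf e i) * b i) = (\<Sum>i<r. \<Phi> (of_rat (cf e i) * b i))"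
        by (rule \<Phi>sum) (intro QC.span_scale[simplified] bsp, simp)
      show ?thesis by (simp only: \<Phi>add[OF s1 s2] s3)
    qed
    also have "\<dots> = (\<Sum>i<r. rf_const (cf e i) * \<Phi> (b i)) + rf_const (c0 e) * \<Phi> 1"
    proof -
      have "\<Phi> (of_rat (c0 e) * 1) = rf_const (c0 e) * \<Phi> 1" by (rule \<Phi>scale[OF spBl[OF one_B']])
      moreover have "(\<Sum>i<r. \<Phi> (of_rat (cf e i) * b i)) = (\<Sum>i<r. rf_const (cf e i) * \<Phi> (b i))"
        by (rule sum.cong) (simp_all only: \<Phi>scale[OF bsp] lessThan_iff)
      ultimately show ?thesis by (simp only:)
    qed
    finally show ?thesis .
  qed
  have G: "map_mat \<Phi> M = mat m n (\<lambda>(p, q). \<Sum>i<k. rf_var i * rf_const (Ms i $$ (p, q)))"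
  proof (rule eq_matI)
    fix p q assume "p < dim_row (mat m n (\<lambda>(p, q). \<Sum>i<k. rf_var i * rf_const (Ms i $$ (p, q))))"
      "q < dim_col (mat m n (\<lambda>(p, q). \<Sum>i<k. rf_var i * rf_const (Ms i $$ (p, q))))"
    then have pq: "p < m" "q < n" by auto
    have "M $$ (p, q) = (\<Sum>i<k. l i * of_rat (Ms i $$ (p, q)))"
      using sd M pq unfolding struct_decomp_def by (metis (no_types, lifting) carrier_matD index_mat(1) prod.simps(2))
    then have "\<Phi> (M $$ (p, q)) = \<Phi> (\<Sum>i<k. of_rat (Ms i $$ (p, q)) * l i)"
      by (simp add: mult.commute)
    also have "\<dots> = (\<Sum>i<k. \<Phi> (of_rat (Ms i $$ (p, q)) * l i))"
      by (rule \<Phi>sum) (intro QC.span_scale[simplified] lsp, simp)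
    also have "\<dots> = (\<Sum>i<k. rf_const (Ms i $$ (p, q)) * rf_var i)"
      by (rule sum.cong) (simp_all only: \<Phi>scale[OF lsp] \<Phi>l lessThan_iff)
    also have "\<dots> = (\<Sum>i<k. rf_var i * rf_const (Ms i $$ (p, q)))"
      by (simp add: mult.commute)
    finally show "map_mat \<Phi> M $$ (p, q) = mat m n (\<lambda>(p, q). \<Sum>i<k. rf_var i * rf_const (Ms i $$ (p, q))) $$ (p, q)"
      using pq M by simp
  qed (use M in auto)
  have entB': "M $$ (p, q) \<in> QC.span B'" if "p < m" "q < n" for p q
    using EB' that M unfolding mat_entries_def by blast
  have "det (submatrix (map_mat \<Phi> M) I J) = 0" if d: "det (submatrix M I J) = 0" for I J
    by (rule core[OF M alg, of cf c0 \<Phi> "\<Phi> 1"]) (use dec phi entB' \<Phi>1 d in auto)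
  with G show ?thesis by blast
qed

lemma ortho_exists:
  fixes xs :: "'a::field vec list"
  assumes xs: "set xs \<subseteq> carrier_vec r" and len: "length xs < r"
  shows "\<exists>v\<in>carrier_vec r. v \<noteq> 0\<^sub>v r \<and> (\<forall>w\<in>set xs. w \<bullet> v = 0)"
proof -
  define c where "c i = (if i < length xs then xs ! i else 0\<^sub>v r)" for i
  have c: "c \<in> {0..<r} \<rightarrow> carrier_vec r"
  proof
    fix i assume "i \<in> {0..<r}"
    show "c i \<in> carrier_vec r"
    proof (cases "i < length xs")
      case True
      then have "xs ! i \<in> set xs" by simp
      with xs True show ?thesis by (simp add: c_def subset_iff)
    next
      case False
      then show ?thesis by (simp add: c_def)
    qed
  qed
  define X where "X = mat\<^sub>r r r (\<lambda>i. if i = r - 1 then 0\<^sub>v r else c i)"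
  have X: "X \<in> carrier_mat r r" unfolding X_def by auto
  have "det X = 0" unfolding X_def by (rule det_row_0[OF _ c]) (use len in auto)
  then obtain v where v: "v \<in> carrier_vec r" "v \<noteq> 0\<^sub>v r" "X *\<^sub>v v = 0\<^sub>v r"
    using det_0_iff_vec_prod_zero_field[OF X] by auto
  have "w \<bullet> v = 0" if "w \<in> set xs" for w
  proof -
    from that obtain a where a: "a < length xs" "w = xs ! a" by (auto simp: in_set_conv_nth)
    have ar: "a < r" "a \<noteq> r - 1" using a len by auto
    have wc: "w \<in> carrier_vec r" using a xs nth_mem by blast
    have 1: "(X *\<^sub>v v) $ a = row X a \<bullet> v" using ar X by auto
    have 2: "row X a = w" unfolding X_def using ar a wc c_def
      by (subst row_mat_of_row_fun) (auto simp: c_def)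
    show ?thesis using 1 2 v ar by auto
  qed
  with v show ?thesis by auto
qed

definition ktriv :: "'a::field mat \<Rightarrow> nat \<Rightarrow> nat set \<Rightarrow> bool" where
  "ktriv A r K \<longleftrightarrow> (\<forall>v\<in>carrier_vec r. (\<forall>i\<in>K. row A i \<bullet> v = 0) \<longrightarrow> v = 0\<^sub>v r)"

lemma ktriv_small:
  assumes A: "A \<in> carrier_mat m r" and K: "K \<subseteq> {..<m}" and c: "card K < r"
  shows "\<not> ktriv A r K"
proof -
  have fin: "finite K" using K finite_subset by blast
  define xs where "xs = map (row A) (sorted_list_of_set K)"
  have "set xs \<subseteq> carrier_vec r" using A K by (auto simp: xs_def fin)
  moreover have "length xs < r" using c fin by (simp add: xs_def)
  ultimately obtain v where "v \<in> carrier_vec r" "v \<noteq> 0\<^sub>v r" "\<forall>w\<in>set xs. w \<bullet> v = 0"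
    using ortho_exists by blast
  then show ?thesis unfolding ktriv_def xs_def using fin by auto
qed

lemma ktriv_base:
  assumes A: "A \<in> carrier_mat m r" and K: "K \<subseteq> {..<m}" and c: "card K = r"
    and kt: "ktriv A r K"
  shows "det (submatrix A K UNIV) \<noteq> 0"
proof
  assume d: "det (submatrix A K UNIV) = 0"
  have fin: "finite K" using K finite_subset by blast
  have e1: "{i. i < dim_row A \<and> i \<in> K} = K" using A K by auto
  have e2: "{j. j < dim_col A \<and> j \<in> UNIV} = {..<r}" using A by auto
  have S: "submatrix A K UNIV \<in> carrier_mat r r"
    unfolding carrier_mat_def using dim_submatrix[of A K UNIV] e1 e2 c A by simp
  obtain v where v: "v \<in> carrier_vec r" "v \<noteq> 0\<^sub>v r" "submatrix A K UNIV *\<^sub>v v = 0\<^sub>v r"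
    using det_0_iff_vec_prod_zero_field[OF S] d by auto
  have "row A i \<bullet> v = 0" if i: "i \<in> K" for i
  proof -
    define a where "a = card {x\<in>K. x < i}"
    have "{x\<in>K. x < i} \<subset> K" using i by auto
    then have ar: "a < r" unfolding a_def using c fin psubset_card_mono by blast
    have pa: "pick K a = i" unfolding a_def by (rule pick_card_in_set[OF i])
    have "0 = (submatrix A K UNIV *\<^sub>v v) $ a" using v ar by auto
    also have "\<dots> = row (submatrix A K UNIV) a \<bullet> v" using S ar by auto
    also have "row (submatrix A K UNIV) a = row A i"
    proof (rule eq_vecI)
      show "dim_vec (row (submatrix A K UNIV) a) = dim_vec (row A i)" using S A by auto
      fix j assume "j < dim_vec (row A i)"
      then have j: "j < r" using A by auto
      have iK: "i < m" using i K by auto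
      have "row (submatrix A K UNIV) a $ j = submatrix A K UNIV $$ (a, j)"
        using S ar j by simp
      also have "\<dots> = A $$ (pick K a, pick UNIV j)"
        by (rule submatrix_index) (use ar j e1 e2 c in simp_all)
      also have "\<dots> = A $$ (i, j)" using pa by (simp add: pick_UNIV)
      also have "\<dots> = row A i $ j" using A iK j by simp
      finally show "row (submatrix A K UNIV) a $ j = row A i $ j" .
    qed
    finally show ?thesis by simp
  qed
  with kt v show False unfolding ktriv_def by auto
qed

lemma ktriv_step:
  assumes A: "A \<in> carrier_mat m r" and K: "K \<subseteq> {..<m}" and c: "card K > r"
    and kt: "ktriv A r K"
  shows "\<exists>i\<in>K. ktriv A r (K - {i})"
proof (rule ccontr)
  assume nt: "\<not> ?thesis"
  have "\<forall>i\<in>K. \<exists>v. v \<in> carrier_vec r \<and> v \<noteq> 0\<^sub>v r \<and> (\<forall>j\<in>K-{i}. row A j \<bullet> v = 0)"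
  proof
    fix i assume "i \<in> K"
    with nt have "\<not> ktriv A r (K - {i})" by blast
    then show "\<exists>v. v \<in> carrier_vec r \<and> v \<noteq> 0\<^sub>v r \<and> (\<forall>j\<in>K-{i}. row A j \<bullet> v = 0)"
      unfolding ktriv_def by blast
  qed
  from bchoice[OF this] obtain V where V0: "\<forall>i\<in>K. V i \<in> carrier_vec r \<and> V i \<noteq> 0\<^sub>v r \<and> (\<forall>j\<in>K-{i}. row A j \<bullet> V i = 0)"
    by blast
  have V: "V i \<in> carrier_vec r \<and> V i \<noteq> 0\<^sub>v r \<and> (\<forall>j\<in>K-{i}. row A j \<bullet> V i = 0)" if "i \<in> K" for i
    using V0 that by blast
  have Vd: "row A i \<bullet> V i \<noteq> 0" if i: "i\<in>K" for i
  proof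
    assume "row A i \<bullet> V i = 0"
    then have "\<forall>j\<in>K. row A j \<bullet> V i = 0" using V[OF i] by blast
    moreover have "V i \<in> carrier_vec r" "V i \<noteq> 0\<^sub>v r" using V[OF i] by auto
    ultimately show False using kt unfolding ktriv_def by blast
  qed
  have fin: "finite K" using K finite_subset by blast
  define ks where "ks = take (Suc r) (sorted_list_of_set K)"
  have ks1: "distinct ks" unfolding ks_def by simp
  have ks2: "length ks = Suc r" unfolding ks_def using c fin by simp
  have ks3: "set ks \<subseteq> K" unfolding ks_def
    by (rule order.trans[OF set_take_subset]) (simp add: fin)
  note ks = ks1 ks2 ks3
  have ksK: "ks ! t \<in> K" if "t < Suc r" for t
  proof -
    have "t < length ks" using ks2 that by simp
    then have "ks ! t \<in> set ks" by (rule nth_mem)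
    then show ?thesis using ks3 by blast
  qed
  define ws where "ws = map (\<lambda>k. vec (Suc r) (\<lambda>t. V (ks!t) $ k)) [0..<r]"
  have ws1: "set ws \<subseteq> carrier_vec (Suc r)" by (auto simp: ws_def)
  have ws2: "length ws < Suc r" by (simp add: ws_def)
  obtain cv where cv: "cv \<in> carrier_vec (Suc r)" "cv \<noteq> 0\<^sub>v (Suc r)" "\<forall>w\<in>set ws. w \<bullet> cv = 0"
    using ortho_exists[OF ws1 ws2] by blast
  have sumz: "(\<Sum>t<Suc r. cv $ t * V (ks!t) $ k) = 0" if k: "k < r" for k
  proof -
    have "vec (Suc r) (\<lambda>t. V (ks!t) $ k) \<in> set ws" using k by (auto simp: ws_def)
    then have "vec (Suc r) (\<lambda>t. V (ks!t) $ k) \<bullet> cv = 0" using cv by blast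
    then show ?thesis using cv(1) by (simp add: scalar_prod_def lessThan_atLeast0 mult.commute)
  qed
  have rowdot: "row A i \<bullet> V j = (\<Sum>k<r. A $$ (i, k) * V j $ k)" if "i \<in> K" "j \<in> K" for i j
  proof -
    have im: "i < m" using that K by auto
    have Vj: "V j \<in> carrier_vec r" using V[OF that(2)] by blast
    then have "dim_vec (V j) = r" by auto
    then show ?thesis using im A by (simp add: scalar_prod_def lessThan_atLeast0)
  qed
  have zs: "cv $ s = 0" if s: "s < Suc r" for s
  proof -
    define i where "i = ks ! s"
    have iK: "i \<in> K" using ksK[OF s] by (simp add: i_def)
    have "0 = (\<Sum>k<r. A $$ (i, k) * (\<Sum>t<Suc r. cv $ t * V (ks!t) $ k))"
      using sumz by simp
    also have "\<dots> = (\<Sum>k<r. \<Sum>t<Suc r. A $$ (i, k) * (cv $ t * V (ks!t) $ k))"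
      by (simp only: sum_distrib_left)
    also have "\<dots> = (\<Sum>t<Suc r. \<Sum>k<r. A $$ (i, k) * (cv $ t * V (ks!t) $ k))"
      by (rule sum.swap)
    also have "\<dots> = (\<Sum>t<Suc r. cv $ t * (\<Sum>k<r. A $$ (i, k) * V (ks!t) $ k))"
      by (simp add: sum_distrib_left mult_ac)
    also have "\<dots> = (\<Sum>t<Suc r. cv $ t * (row A i \<bullet> V (ks!t)))"
      using rowdot[OF iK ksK] by simp
    also have "\<dots> = cv $ s * (row A i \<bullet> V (ks!s))"
    proof -
      show "(\<Sum>t<Suc r. cv $ t * (row A i \<bullet> V (ks!t))) = cv $ s * (row A i \<bullet> V (ks!s))"
      proof (subst sum.remove[of _ s])
        have "(\<Sum>t\<in>{..<Suc r} - {s}. cv $ t * (row A i \<bullet> V (ks!t))) = 0"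
        proof (rule sum.neutral, rule ballI)
          fix t assume t: "t \<in> {..<Suc r} - {s}"
          then have "ks ! t \<noteq> i" using ks s by (auto simp: i_def nth_eq_iff_index_eq)
          then have "i \<in> K - {ks ! t}" using iK by auto
          then have "row A i \<bullet> V (ks!t) = 0" using V[OF ksK] t by auto
          then show "cv $ t * (row A i \<bullet> V (ks!t)) = 0" by simp
        qed
        then show "cv $ s * (row A i \<bullet> V (ks ! s)) + (\<Sum>t\<in>{..<Suc r} - {s}. cv $ t * (row A i \<bullet> V (ks ! t))) =
          cv $ s * (row A i \<bullet> V (ks ! s))" by simp
      qed (use s in auto)
    qed
    finally have "cv $ s * (row A i \<bullet> V i) = 0" by (simp add: i_def)
    then show ?thesis using Vd[OF iK] by simp
  qed
  have "cv = 0\<^sub>v (Suc r)"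
  proof (rule eq_vecI)
    fix s assume "s < dim_vec (0\<^sub>v (Suc r))"
    then show "cv $ s = 0\<^sub>v (Suc r) $ s" using zs by simp
  next
    show "dim_vec cv = dim_vec (0\<^sub>v (Suc r))" using cv(1) by simp
  qed
  then show False using cv(2) by simp
qed

lemma rowsel:
  assumes A: "A \<in> carrier_mat m r"
  shows "K \<subseteq> {..<m} \<Longrightarrow> ktriv A r K \<Longrightarrow> \<exists>I\<subseteq>K. card I = r \<and> det (submatrix A I UNIV) \<noteq> 0"
proof (induction "card K" arbitrary: K rule: less_induct)
  case less
  have fin: "finite K" using less.prems finite_subset by blast
  consider "card K < r" | "card K = r" | "card K > r" by linarith
  then show ?case
  proof cases
    case 1
    then show ?thesis using ktriv_small[OF A less.prems(1)] less.prems(2) by blast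
  next
    case 2
    then show ?thesis using ktriv_base[OF A less.prems(1) 2 less.prems(2)] by blast
  next
    case 3
    then obtain i where i: "i \<in> K" "ktriv A r (K - {i})"
      using ktriv_step[OF A less.prems(1) 3 less.prems(2)] by blast
    have "card (K - {i}) < card K" using card_Diff1_less[OF fin i(1)] .
    moreover have "K - {i} \<subseteq> {..<m}" using less.prems(1) by blast
    ultimately obtain I where "I \<subseteq> K - {i}" "card I = r" "det (submatrix A I UNIV) \<noteq> 0"
      using less.hyps i(2) by blast
    then show ?thesis by blast
  qed
qed

lemma col_submatrix_UNIV:
  assumes "a < card {j. j < dim_col A \<and> j \<in> J}"
  shows "col (submatrix A UNIV J) a = col A (pick J a)"
proof (rule eq_vecI)
  show "dim_vec (col (submatrix A UNIV J) a) = dim_vec (col A (pick J a))"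
    by (simp add: dim_submatrix)
  fix i assume "i < dim_vec (col A (pick J a))"
  then have i: "i < dim_row A" by simp
  have "col (submatrix A UNIV J) a $ i = submatrix A UNIV J $$ (i, a)"
    using i assms by (simp add: dim_submatrix)
  also have "\<dots> = A $$ (pick UNIV i, pick J a)"
    by (rule submatrix_index) (use i assms in simp_all)
  also have "\<dots> = col A (pick J a) $ i" using i pick_le[OF assms] by (simp add: pick_UNIV)
  finally show "col (submatrix A UNIV J) a $ i = col A (pick J a) $ i" .
qed

lemma minor_exists:
  fixes A :: "'a::field mat"
  assumes A: "A \<in> carrier_mat m n"
  shows "\<exists>I J. card {j. j < n \<and> j \<in> J} = vec_space.rank m A \<and> det (submatrix A I J) \<noteq> 0"
proof -
  interpret vec_space "TYPE('a)" m .
  obtain S where S: "maximal S (\<lambda>T. T \<subseteq> set (cols A) \<and> lin_indpt T)"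
    using maximal_exists[of "(\<lambda>T. T \<subseteq> set (cols A) \<and> lin_indpt T)" "card (set (cols A))" "{}"]
    by (meson List.finite_set card_mono empty_iff empty_subsetI finite_lin_indpt2 rev_finite_subset)
  have rk: "rank A = card S" using rank_card_indpt[OF A S] .
  have Scols: "S \<subseteq> set (cols A)" and Sli: "lin_indpt S" using S unfolding maximal_def by auto
  define J where "J = {j. j < n \<and> col A j \<in> S \<and> (\<forall>j'<j. col A j' \<noteq> col A j)}"
  have Jn: "J \<subseteq> {..<n}" unfolding J_def by auto
  have finJ: "finite J" using Jn finite_subset by blast
  have inj: "inj_on (col A) J"
  proof (rule inj_onI)
    fix x y assume x: "x \<in> J" and y: "y \<in> J" and e: "col A x = col A y"
    show "x = y"
    proof (rule ccontr)
      assume "x \<noteq> y"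
      then consider "x < y" | "y < x" by linarith
      then show False
      proof cases
        case 1 then show False using y e unfolding J_def by auto
      next
        case 2 then show False using x e unfolding J_def by auto
      qed
    qed
  qed
  have img: "col A ` J = S"
  proof
    show "col A ` J \<subseteq> S" unfolding J_def by auto
    show "S \<subseteq> col A ` J"
    proof
      fix s assume s: "s \<in> S"
      then have "s \<in> set (cols A)" using Scols by blast
      then have ex: "\<exists>j. j < n \<and> col A j = s" using A by (auto simp: cols_def)
      define j0 where "j0 = (LEAST j. j < n \<and> col A j = s)"
      have j0: "j0 < n \<and> col A j0 = s" unfolding j0_def using LeastI_ex[OF ex] .
      have "\<forall>j'<j0. col A j' \<noteq> col A j0"
      proof (intro allI impI)
        fix j' assume j': "j' < j0"
        show "col A j' \<noteq> col A j0"
        proof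
          assume "col A j' = col A j0"
          then have "j' < n \<and> col A j' = s" using j0 j' by auto
          then have "j0 \<le> j'" unfolding j0_def by (rule Least_le)
          then show False using j' by simp
        qed
      qed
      then have "j0 \<in> J" using j0 s unfolding J_def by auto
      then show "s \<in> col A ` J" using j0 by blast
    qed
  qed
  have cardJ: "card J = card S" using card_image[OF inj] img by simp
  have cJ: "{j. j < dim_col A \<and> j \<in> J} = J" using Jn A by auto
  have "{j. j < n \<and> j \<in> J} = J" using Jn by auto
  then have cJ': "card {j. j < n \<and> j \<in> J} = card J" by simp
  define B where "B = submatrix A UNIV J"
  have Bc: "B \<in> carrier_mat m (card J)"
    unfolding B_def carrier_mat_def using A cJ by (simp add: dim_submatrix)
  have colB: "col B a = col A (pick J a)" if "a < card J" for a
    unfolding B_def using that cJ by (intro col_submatrix_UNIV) simp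
  have pickJ: "pick J a \<in> J" if "a < card J" for a using pick_in_set that by blast
  have distB: "distinct (cols B)"
  proof (subst distinct_conv_nth, intro allI impI)
    fix a b assume a: "a < length (cols B)" and b: "b < length (cols B)" and ab: "a \<noteq> b"
    have a': "a < card J" and b': "b < card J" using a b Bc by auto
    show "cols B ! a \<noteq> cols B ! b"
    proof
      assume "cols B ! a = cols B ! b"
      then have "col A (pick J a) = col A (pick J b)" using a' b' Bc colB by simp
      then have "pick J a = pick J b" using inj pickJ a' b' by (meson inj_onD)
      moreover have "pick J a \<noteq> pick J b"
      proof (cases "a < b")
        case True
        then show ?thesis using pick_mono[of b J a] b' by simp
      next
        case False
        then have "b < a" using ab by simp
        then show ?thesis using pick_mono[of a J b] a' by simp
      qed
      ultimately show False by simp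
    qed
  qed
  have setB: "set (cols B) \<subseteq> S"
  proof
    fix x assume "x \<in> set (cols B)"
    then obtain a where a: "a < length (cols B)" "x = cols B ! a" by (auto simp: in_set_conv_nth)
    then have a': "a < card J" using Bc by simp
    have "x = col A (pick J a)" using a a' colB Bc by simp
    then show "x \<in> S" using img pickJ[OF a'] by blast
  qed
  have kt: "ktriv B (card J) {..<m}"
    unfolding ktriv_def
  proof (intro ballI impI)
    fix v :: "'a vec" assume v: "v \<in> carrier_vec (card J)" and z: "\<forall>i\<in>{..<m}. row B i \<bullet> v = 0"
    have Bv: "B *\<^sub>v v = 0\<^sub>v m"
    proof (rule eq_vecI)
      fix i assume "i < dim_vec (0\<^sub>v m)"
      then have i: "i < m" by simp
      then show "(B *\<^sub>v v) $ i = 0\<^sub>v m $ i" using z Bc by simp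
    next
      show "dim_vec (B *\<^sub>v v) = dim_vec (0\<^sub>v m)" using Bc by simp
    qed
    show "v = 0\<^sub>v (card J)"
    proof (rule ccontr)
      assume "v \<noteq> 0\<^sub>v (card J)"
      then have "lin_dep (set (cols B))" using lin_depI[OF Bc v _ Bv distB] by blast
      then have "lin_dep S" using supset_ld_is_ld setB by blast
      then show False using Sli by blast
    qed
  qed
  obtain I where I: "I \<subseteq> {..<m}" "card I = card J" "det (submatrix B I UNIV) \<noteq> 0"
    using rowsel[OF Bc _ kt] by blast
  have "submatrix A I J = submatrix B I UNIV" unfolding B_def by (rule submatrix_split)
  then have "det (submatrix A I J) \<noteq> 0" using I by simp
  moreover have "card {j. j < n \<and> j \<in> J} = rank A" using cJ' cardJ rk by simp
  ultimately show ?thesis by blast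
qed

lemma rank_eq_minors:
  fixes A :: "'a::field mat" and B :: "'b::field mat"
  assumes A: "A \<in> carrier_mat m n" and B: "B \<in> carrier_mat m n"
    and eq: "\<And>I J. det (submatrix A I J) \<noteq> 0 \<longleftrightarrow> det (submatrix B I J) \<noteq> 0"
  shows "vec_space.rank m A = vec_space.rank m B"
proof (rule antisym)
  obtain I J where IJ: "card {j. j < n \<and> j \<in> J} = vec_space.rank m A" "det (submatrix A I J) \<noteq> 0"
    using minor_exists[OF A] by blast
  have "card {j. j < n \<and> j \<in> J} \<le> vec_space.rank m B"
    by (rule vec_space.rank_gt_minor[OF B]) (use IJ eq in blast)
  then show "vec_space.rank m A \<le> vec_space.rank m B" using IJ by simp
next
  obtain I J where IJ: "card {j. j < n \<and> j \<in> J} = vec_space.rank m B" "det (submatrix B I J) \<noteq> 0"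
    using minor_exists[OF B] by blast
  have "card {j. j < n \<and> j \<in> J} \<le> vec_space.rank m A"
    by (rule vec_space.rank_gt_minor[OF A]) (use IJ eq in blast)
  then show "vec_space.rank m B \<le> vec_space.rank m A" using IJ by simp
qed

theorem lemma4p12:
  assumes hyp: "\<forall>n\<ge>1. \<forall>y :: nat \<Rightarrow> complex.
                  (\<forall>i<n. y i \<in> Lset) \<and> q_indep n y \<longrightarrow> alg_indep n y"
  shows "\<forall>m n (M :: complex mat). m > 0 \<and> n > 0 \<and> M \<in> carrier_mat m n \<and>
           (\<forall>i<m. \<forall>j<n. M $$ (i, j) \<in> qspan (Lset \<union> \<rat>)) \<longrightarrow>
           vec_space.rank m M = structural_rank M"
proof (intro allI impI)
  fix m n and M :: "complex mat"
  assume H: "m > 0 \<and> n > 0 \<and> M \<in> carrier_mat m n \<and> (\<forall>i<m. \<forall>j<n. M $$ (i, j) \<in> qspan (Lset \<union> \<rat>))"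
  then have M: "M \<in> carrier_mat m n" and ent: "\<forall>i<m. \<forall>j<n. M $$ (i, j) \<in> qspan (Lset \<union> \<rat>)" by auto
  define trip where "trip = (SOME (k, l, Ms). struct_decomp M k l Ms)"
  obtain k l Ms where tr: "trip = (k, l, Ms)" by (cases trip) auto
  have "\<exists>x. (\<lambda>(k, l, Ms). struct_decomp M k l Ms) x" using decomp_exists[of M] by auto
  then have "(\<lambda>(k, l, Ms). struct_decomp M k l Ms) trip" unfolding trip_def by (rule someI_ex)
  then have sd: "struct_decomp M k l Ms" using tr by simp
  define G where "G = mat m n (\<lambda>(p, q). \<Sum>i<k. rf_var i * rf_const (Ms i $$ (p, q)))"
  have dimM: "dim_row M = m" "dim_col M = n" using M by auto
  have sr: "structural_rank M = vec_space.rank m G"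
    unfolding structural_rank_def trip_def[symmetric] tr G_def dimM by simp
  have dec: "M $$ (p, q) = (\<Sum>i<k. l i * of_rat (Ms i $$ (p, q)))" if "p < m" "q < n" for p q
  proof -
    have "M = mat (dim_row M) (dim_col M) (\<lambda>(r, c). \<Sum>i<k. l i * of_rat (Ms i $$ (r, c)))"
      using sd unfolding struct_decomp_def by blast
    then have "M $$ (p, q) = mat m n (\<lambda>(r, c). \<Sum>i<k. l i * of_rat (Ms i $$ (r, c))) $$ (p, q)"
      unfolding dimM by metis
    then show ?thesis using that by simp
  qed
  obtain \<Phi> where \<Phi>: "map_mat \<Phi> M = G"
    and det0: "\<And>I J. det (submatrix M I J) = 0 \<Longrightarrow> det (submatrix (map_mat \<Phi> M) I J) = 0"
    using transfer1[OF hyp M ent sd] unfolding G_def by blast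
  have Gc: "G \<in> carrier_mat m n" unfolding G_def by simp
  have eq: "det (submatrix M I J) \<noteq> 0 \<longleftrightarrow> det (submatrix G I J) \<noteq> 0" for I J
  proof
    assume d: "det (submatrix M I J) \<noteq> 0"
    show "det (submatrix G I J) \<noteq> 0"
      by (rule transfer2[where l=l and Ms=Ms and k=k, OF M dec G_def d])
  next
    assume "det (submatrix G I J) \<noteq> 0"
    then show "det (submatrix M I J) \<noteq> 0" using det0 \<Phi> by metis
  qed
  show "vec_space.rank m M = structural_rank M"
    unfolding sr by (rule rank_eq_minors[OF M Gc eq])
qed

end
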